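(* Let $(B,\|\cdot\|)$ be a real separable Banach space, let $X, X_1, X_2, \ldots$ be i.i.d. $B$-valued random variables with mean zero and $S_n=\sum_{i=1}^nX_i$. Let $\{c_n\}$ be a sequence of positive real numbers such that $c_n/\sqrt n$ is non-decreasing and tends to $\infty$, and such that for every $\epsilon>0$ there exists $m_\epsilon\ge1$ with $c_n/c_m\le(1+\epsilon)(n/m)$ whenever $m_\epsilon\le m<n$. Assume $\sum_{n=1}^\infty\mathbb{P}\{\|X\|\ge c_n\}<\infty$. Then: (a) $\{S_n/c_n;\ n\ge1\}$ is bounded in probability if and only if $\limsup_{n\to\infty}\mathbb{E}\|S_n\|/c_n<\infty$; (b) $S_n/c_n\to0$ in probability if and only if $\mathbb{E}\|S_n\|/c_n\to0$. *)

theory Defs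
  imports "HOL-Probability.Probability"
begin

definition partial_sum :: "(nat \<Rightarrow> 'a \<Rightarrow> 'b::real_normed_vector) \<Rightarrow> nat \<Rightarrow> 'a \<Rightarrow> 'b" where
  "partial_sum Xs n = (\<lambda>\<omega>. \<Sum>i\<in>{1..n}. Xs i \<omega>)"

definition bounded_in_prob :: "'a measure \<Rightarrow> (nat \<Rightarrow> 'a \<Rightarrow> 'b::real_normed_vector) \<Rightarrow> bool" where
  "bounded_in_prob M Y \<longleftrightarrow>
     (\<forall>\<epsilon>>0. \<exists>K. \<forall>n\<ge>1. measure M {\<omega>\<in>space M. norm (Y n \<omega>) > K} \<le> \<epsilon>)"

definition tendsto_zero_in_prob :: "'a measure \<Rightarrow> (nat \<Rightarrow> 'a \<Rightarrow> 'b::real_normed_vector) \<Rightarrow> bool" where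
  "tendsto_zero_in_prob M Y \<longleftrightarrow>
     (\<forall>\<epsilon>>0. (\<lambda>n. measure M {\<omega>\<in>space M. norm (Y n \<omega>) > \<epsilon>}) \<longlonglongrightarrow> 0)"

end

theory Submission
  imports Defs
begin
lemma layer_cake:
  assumes sf: "sigma_finite_measure M"
    and [measurable]: "Z \<in> borel_measurable M"
  shows "(\<integral>\<^sup>+x. ennreal (Z x) \<partial>M) =
         (\<integral>\<^sup>+u. emeasure M {x\<in>space M. u < Z x} * indicator {0..} u \<partial>lborel)"
proof -
  interpret sf: sigma_finite_measure M by (rule sf)
  interpret p: pair_sigma_finite M lborel
    by (intro pair_sigma_finite.intro sf lborel.sigma_finite_measure_axioms)
  have "(\<integral>\<^sup>+x. ennreal (Z x) \<partial>M) =
        (\<integral>\<^sup>+x. (\<integral>\<^sup>+u. indicator {(x,u). 0 \<le> u \<and> u < Z x} (x,u) \<partial>lborel) \<partial>M)"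
  proof (rule nn_integral_cong)
    fix x assume "x \<in> space M"
    have "(\<lambda>u. indicator {(x,u). 0 \<le> u \<and> u < Z x} (x,u) :: ennreal) = indicator {0..<Z x}"
      by (auto simp: indicator_def fun_eq_iff)
    then show "ennreal (Z x) = (\<integral>\<^sup>+u. indicator {(x,u). 0 \<le> u \<and> u < Z x} (x,u) \<partial>lborel)"
      by (cases "0 \<le> Z x") (auto simp: ennreal_neg)
  qed
  also have "\<dots> = (\<integral>\<^sup>+u. (\<integral>\<^sup>+x. indicator {(x,u). 0 \<le> u \<and> u < Z x} (x,u) \<partial>M) \<partial>lborel)"
  proof (rule p.Fubini[symmetric])
    have "{(x, u). 0 \<le> u \<and> u < Z x} \<inter> space (M \<Otimes>\<^sub>M lborel) \<in> sets (M \<Otimes>\<^sub>M lborel)"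
      by measurable
    then have "indicator ({(x, u). 0 \<le> u \<and> u < Z x} \<inter> space (M \<Otimes>\<^sub>M lborel)) \<in> borel_measurable (M \<Otimes>\<^sub>M lborel)"
      by (rule borel_measurable_indicator)
    then show "indicator {(x, u). 0 \<le> u \<and> u < Z x} \<in> borel_measurable (M \<Otimes>\<^sub>M lborel)"
      by (rule measurable_cong[THEN iffD1, rotated]) (auto simp: indicator_def space_pair_measure)
  qed
  also have "\<dots> = (\<integral>\<^sup>+u. emeasure M {x\<in>space M. u < Z x} * indicator {0..} u \<partial>lborel)"
  proof (rule nn_integral_cong)
    fix u :: real
    have "(\<integral>\<^sup>+x. indicator {(x,u). 0 \<le> u \<and> u < Z x} (x,u) \<partial>M) =
          (\<integral>\<^sup>+x. indicator {x\<in>space M. u < Z x} x * indicator {0..} u \<partial>M)"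
      by (intro nn_integral_cong) (auto simp: indicator_def)
    also have "\<dots> = emeasure M {x\<in>space M. u < Z x} * indicator {0..} u"
      by (subst nn_integral_multc) auto
    finally show "(\<integral>\<^sup>+x. indicator {(x,u). 0 \<le> u \<and> u < Z x} (x,u) \<partial>M) =
          emeasure M {x\<in>space M. u < Z x} * indicator {0..} u" .
  qed
  finally show ?thesis .
qed


lemma (in prob_space) prob_tail_meas[measurable]:
  fixes Z :: "'a \<Rightarrow> real"
  assumes [measurable]: "Z \<in> borel_measurable M"
  shows "(\<lambda>u. prob {\<omega>\<in>space M. u < Z \<omega>}) \<in> borel_measurable borel"
proof -
  have "mono (\<lambda>u. - prob {\<omega>\<in>space M. u < Z \<omega>})"
    by (auto simp: mono_def intro!: finite_measure_mono)
  then have "(\<lambda>u. - prob {\<omega>\<in>space M. u < Z \<omega>}) \<in> borel_measurable borel"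
    by (rule borel_measurable_mono)
  then have "(\<lambda>u. - (- prob {\<omega>\<in>space M. u < Z \<omega>})) \<in> borel_measurable borel"
    by measurable
  then show ?thesis by simp
qed

lemma (in prob_space) layer_cake_prob:
  assumes [measurable]: "Z \<in> borel_measurable M"
  shows "(\<integral>\<^sup>+\<omega>. ennreal (Z \<omega>) \<partial>M) = (\<integral>\<^sup>+u. ennreal (prob {\<omega>\<in>space M. u < Z \<omega>} * indicator {0..} u) \<partial>lborel)"
  unfolding layer_cake[OF sigma_finite_measure_axioms assms]
  by (intro nn_integral_cong) (auto simp: emeasure_eq_measure indicator_def)

locale iid_setup = prob_space M for M :: "'a measure" +
  fixes Xs :: "nat \<Rightarrow> 'a \<Rightarrow> 'b::{banach, second_countable_topology}"
  assumes Xs_meas[measurable]: "\<And>i. Xs i \<in> borel_measurable M"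
    and Xs_indep: "indep_vars (\<lambda>_. borel) Xs {1..}"
    and Xs_int: "\<And>i. integrable M (Xs i)"
    and Xs0: "Xs 0 = (\<lambda>_. 0)"
begin

definition Zm :: "nat \<Rightarrow> 'a \<Rightarrow> real" where
  "Zm n \<omega> = Max ((\<lambda>k. norm (partial_sum Xs k \<omega>)) ` {..n})"

definition Wm :: "nat \<Rightarrow> 'a \<Rightarrow> real" where
  "Wm n \<omega> = Max ((\<lambda>i. norm (Xs i \<omega>)) ` {..n})"

definition stopP :: "real \<Rightarrow> nat \<Rightarrow> 'a \<Rightarrow> bool" where
  "stopP a k \<omega> \<longleftrightarrow> a < norm (partial_sum Xs k \<omega>) \<and> (\<forall>j\<in>{..<k}. norm (partial_sum Xs j \<omega>) \<le> a)"

lemma S_meas[measurable]: "partial_sum Xs k \<in> borel_measurable M"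
  unfolding partial_sum_def by measurable

lemma Zm_meas[measurable]: "Zm n \<in> borel_measurable M"
  unfolding Zm_def by measurable

lemma Wm_meas[measurable]: "Wm n \<in> borel_measurable M"
  unfolding Wm_def by measurable

lemma stopP_meas[measurable]: "Measurable.pred M (stopP a k)"
  unfolding stopP_def by measurable

lemma S_int: "integrable M (partial_sum Xs k)"
  unfolding partial_sum_def by (intro Bochner_Integration.integrable_sum Xs_int)

lemma S0[simp]: "partial_sum Xs 0 \<omega> = 0"
  by (simp add: partial_sum_def)

lemma S_Suc: "partial_sum Xs (Suc k) \<omega> = partial_sum Xs k \<omega> + Xs (Suc k) \<omega>"
  by (simp add: partial_sum_def)

lemma norm_S_le_Zm: "k \<le> n \<Longrightarrow> norm (partial_sum Xs k \<omega>) \<le> Zm n \<omega>"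
  unfolding Zm_def by (intro Max_ge) auto

lemma Zm_nonneg: "0 \<le> Zm n \<omega>"
  using norm_S_le_Zm[of 0 n \<omega>] by simp

lemma norm_X_le_Wm: "i \<le> n \<Longrightarrow> norm (Xs i \<omega>) \<le> Wm n \<omega>"
  unfolding Wm_def by (intro Max_ge) auto

lemma Zm_gt_iff:
  assumes "0 \<le> a"
  shows "a < Zm n \<omega> \<longleftrightarrow> (\<exists>k\<in>{1..n}. stopP a k \<omega>)"
proof
  assume "a < Zm n \<omega>"
  then obtain k where k: "k \<le> n" "a < norm (partial_sum Xs k \<omega>)"
    unfolding Zm_def by (subst (asm) Max_gr_iff) auto
  define k0 where "k0 = (LEAST k. a < norm (partial_sum Xs k \<omega>))"
  have k0: "a < norm (partial_sum Xs k0 \<omega>)" "k0 \<le> k"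
    unfolding k0_def using k by (auto intro: LeastI Least_le)
  have "\<forall>j\<in>{..<k0}. norm (partial_sum Xs j \<omega>) \<le> a"
    unfolding k0_def using not_less_Least by fastforce
  moreover have "k0 \<noteq> 0" using k0 assms by (metis S0 norm_zero not_less)
  ultimately show "\<exists>k\<in>{1..n}. stopP a k \<omega>"
    using k0 k by (intro bexI[of _ k0]) (auto simp: stopP_def)
next
  assume "\<exists>k\<in>{1..n}. stopP a k \<omega>"
  then obtain k where "k \<in> {1..n}" "stopP a k \<omega>" by auto
  then show "a < Zm n \<omega>"
    using norm_S_le_Zm[of k n \<omega>] by (auto simp: stopP_def)
qed

lemma stopP_disj: "stopP a k \<omega> \<Longrightarrow> stopP a k' \<omega> \<Longrightarrow> k = k'"
  unfolding stopP_def by (metis lessThan_iff linorder_neqE_nat not_le)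

lemma prob_Zm_gt:
  assumes "0 \<le> a"
  shows "prob {\<omega>\<in>space M. a < Zm n \<omega>} = (\<Sum>k\<in>{1..n}. prob {\<omega>\<in>space M. stopP a k \<omega>})"
proof -
  have "{\<omega>\<in>space M. a < Zm n \<omega>} = (\<Union>k\<in>{1..n}. {\<omega>\<in>space M. stopP a k \<omega>})"
    using Zm_gt_iff[OF assms] by auto
  also have "prob \<dots> = (\<Sum>k\<in>{1..n}. prob {\<omega>\<in>space M. stopP a k \<omega>})"
    by (rule finite_measure_finite_Union) (auto simp: disjoint_family_on_def dest: stopP_disj)
  finally show ?thesis .
qed

lemma indep_blocks:
  assumes P: "P \<in> measurable (PiM {1..k} (\<lambda>_. borel)) (count_space UNIV)"
    and Q: "Q \<in> measurable (PiM {Suc k..n} (\<lambda>_. borel)) (count_space UNIV)"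
  shows "prob {\<omega>\<in>space M. P (restrict (\<lambda>i. Xs i \<omega>) {1..k}) \<and> Q (restrict (\<lambda>i. Xs i \<omega>) {Suc k..n})}
       = prob {\<omega>\<in>space M. P (restrict (\<lambda>i. Xs i \<omega>) {1..k})} * prob {\<omega>\<in>space M. Q (restrict (\<lambda>i. Xs i \<omega>) {Suc k..n})}"
proof -
  have "indep_var (PiM {1..k} (\<lambda>_. borel)) (\<lambda>\<omega>. restrict (\<lambda>i. Xs i \<omega>) {1..k})
                  (PiM {Suc k..n} (\<lambda>_. borel)) (\<lambda>\<omega>. restrict (\<lambda>i. Xs i \<omega>) {Suc k..n})"
    by (rule indep_var_restrict[OF Xs_indep]) auto
  then have "indep_var (count_space UNIV) (P \<circ> (\<lambda>\<omega>. restrict (\<lambda>i. Xs i \<omega>) {1..k}))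
                  (count_space UNIV) (Q \<circ> (\<lambda>\<omega>. restrict (\<lambda>i. Xs i \<omega>) {Suc k..n}))"
    by (rule indep_var_compose) (rule P, rule Q)
  from indep_varD[OF this, of "{True}" "{True}"] show ?thesis
    by (simp add: vimage_def Int_def conj_commute)
qed

lemma sum_comp_meas:
  assumes "J \<subseteq> I" "finite J"
  shows "(\<lambda>x. \<Sum>i\<in>J. x i) \<in> borel_measurable (PiM I (\<lambda>_. borel :: 'b measure))"
  by (rule borel_measurable_sum) (rule measurable_component_singleton, use assms in auto)

definition PA :: "real \<Rightarrow> nat \<Rightarrow> (nat \<Rightarrow> 'b) \<Rightarrow> bool" where
  "PA a k x \<longleftrightarrow> a < norm (\<Sum>i\<in>{1..k}. x i) \<and> (\<forall>j\<in>{..<k}. norm (\<Sum>i\<in>{1..j}. x i) \<le> a)"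

lemma PA_meas: "PA a k \<in> measurable (PiM {1..k} (\<lambda>_. borel)) (count_space UNIV)"
proof -
  have m: "\<And>j. j \<le> k \<Longrightarrow> (\<lambda>x. \<Sum>i\<in>{1..j}. x i) \<in> borel_measurable (PiM {1..k} (\<lambda>_. borel :: 'b measure))"
    by (rule sum_comp_meas) auto
  have p1: "Measurable.pred (PiM {1..k} (\<lambda>_. borel)) (\<lambda>x::nat\<Rightarrow>'b. norm (\<Sum>i\<in>{1..j}. x i) \<le> a)"
    and p2: "Measurable.pred (PiM {1..k} (\<lambda>_. borel)) (\<lambda>x::nat\<Rightarrow>'b. a < norm (\<Sum>i\<in>{1..j}. x i))"
    if "j \<le> k" for j
  proof -
    note mj = measurable_compose[OF m[OF that] borel_measurable_norm]
    show "Measurable.pred (PiM {1..k} (\<lambda>_. borel)) (\<lambda>x::nat\<Rightarrow>'b. norm (\<Sum>i\<in>{1..j}. x i) \<le> a)"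
      by (rule pred_le_const[OF mj]) simp
    show "Measurable.pred (PiM {1..k} (\<lambda>_. borel)) (\<lambda>x::nat\<Rightarrow>'b. a < norm (\<Sum>i\<in>{1..j}. x i))"
      by (rule pred_const_less[OF mj]) simp
  qed
  show ?thesis
    unfolding PA_def
    by (intro pred_intros_logic pred_intros_finite(3) p1 p2) auto
qed

lemma stopP_PA: "stopP a k \<omega> \<longleftrightarrow> PA a k (restrict (\<lambda>i. Xs i \<omega>) {1..k})"
proof -
  have "\<And>j. j \<le> k \<Longrightarrow> (\<Sum>i\<in>{1..j}. restrict (\<lambda>i. Xs i \<omega>) {1..k} i) = partial_sum Xs j \<omega>"
    by (auto simp: partial_sum_def intro!: sum.cong)
  then show ?thesis
    unfolding stopP_def PA_def by auto
qed

lemma S_diff: "k \<le> j \<Longrightarrow> partial_sum Xs j \<omega> - partial_sum Xs k \<omega> = (\<Sum>i\<in>{Suc k..j}. Xs i \<omega>)"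
proof (induction j rule: dec_induct)
  case base then show ?case by simp
next
  case (step j)
  then show ?case by (simp add: S_Suc)
qed

lemma indep_stop:
  assumes Q: "Q \<in> measurable (PiM {Suc k..n} (\<lambda>_. borel)) (count_space UNIV)"
  shows "prob {\<omega>\<in>space M. stopP a k \<omega> \<and> Q (restrict (\<lambda>i. Xs i \<omega>) {Suc k..n})}
       = prob {\<omega>\<in>space M. stopP a k \<omega>} * prob {\<omega>\<in>space M. Q (restrict (\<lambda>i. Xs i \<omega>) {Suc k..n})}"
  unfolding stopP_PA by (rule indep_blocks[OF PA_meas Q])

lemma ottaviani:
  assumes "0 \<le> a" "0 \<le> b"
    and beta: "\<And>k. k \<in> {1..n} \<Longrightarrow> prob {\<omega>\<in>space M. b < norm (partial_sum Xs n \<omega> - partial_sum Xs k \<omega>)} \<le> \<beta>"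
  shows "(1 - \<beta>) * prob {\<omega>\<in>space M. a + b < Zm n \<omega>} \<le> prob {\<omega>\<in>space M. a < norm (partial_sum Xs n \<omega>)}"
proof -
  define Q where "Q k y = (norm (\<Sum>i\<in>{Suc k..n}. y i) \<le> b)" for k and y :: "nat \<Rightarrow> 'b"
  have Qm: "Q k \<in> measurable (PiM {Suc k..n} (\<lambda>_. borel)) (count_space UNIV)" for k
  proof -
    note mk[measurable] = sum_comp_meas[of "{Suc k..n}" "{Suc k..n}"]
    show ?thesis unfolding Q_def by measurable
  qed
  have Qeq: "k \<le> n \<Longrightarrow> Q k (restrict (\<lambda>i. Xs i \<omega>) {Suc k..n}) \<longleftrightarrow> norm (partial_sum Xs n \<omega> - partial_sum Xs k \<omega>) \<le> b" for k \<omega>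
    unfolding Q_def by (simp add: S_diff)
  have step: "(1 - \<beta>) * prob {\<omega>\<in>space M. stopP (a+b) k \<omega>} \<le>
      prob {\<omega>\<in>space M. stopP (a+b) k \<omega> \<and> norm (partial_sum Xs n \<omega> - partial_sum Xs k \<omega>) \<le> b}"
    if k: "k \<in> {1..n}" for k
  proof -
    have "prob {\<omega>\<in>space M. stopP (a+b) k \<omega> \<and> norm (partial_sum Xs n \<omega> - partial_sum Xs k \<omega>) \<le> b}
        = prob {\<omega>\<in>space M. stopP (a+b) k \<omega> \<and> Q k (restrict (\<lambda>i. Xs i \<omega>) {Suc k..n})}"
      using k by (intro arg_cong[where f=prob]) (auto simp: Qeq)
    also have "\<dots> = prob {\<omega>\<in>space M. stopP (a+b) k \<omega>} * prob {\<omega>\<in>space M. Q k (restrict (\<lambda>i. Xs i \<omega>) {Suc k..n})}"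
      by (rule indep_stop[OF Qm])
    also have "prob {\<omega>\<in>space M. Q k (restrict (\<lambda>i. Xs i \<omega>) {Suc k..n})}
        = prob {\<omega>\<in>space M. norm (partial_sum Xs n \<omega> - partial_sum Xs k \<omega>) \<le> b}"
      using k by (intro arg_cong[where f=prob]) (auto simp: Qeq)
    also have "\<dots> = 1 - prob {\<omega>\<in>space M. b < norm (partial_sum Xs n \<omega> - partial_sum Xs k \<omega>)}"
    proof -
      have "{\<omega>\<in>space M. norm (partial_sum Xs n \<omega> - partial_sum Xs k \<omega>) \<le> b}
          = space M - {\<omega>\<in>space M. b < norm (partial_sum Xs n \<omega> - partial_sum Xs k \<omega>)}" by auto
      then show ?thesis by (simp add: prob_compl)
    qed
    finally have eq: "prob {\<omega>\<in>space M. stopP (a+b) k \<omega> \<and> norm (partial_sum Xs n \<omega> - partial_sum Xs k \<omega>) \<le> b}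
        = prob {\<omega>\<in>space M. stopP (a+b) k \<omega>} * (1 - prob {\<omega>\<in>space M. b < norm (partial_sum Xs n \<omega> - partial_sum Xs k \<omega>)})" .
    show ?thesis unfolding eq mult.commute[of "1 - \<beta>"]
      by (intro mult_left_mono) (use beta[OF k] in auto)
  qed
  have "(1 - \<beta>) * prob {\<omega>\<in>space M. a + b < Zm n \<omega>} = (\<Sum>k\<in>{1..n}. (1 - \<beta>) * prob {\<omega>\<in>space M. stopP (a+b) k \<omega>})"
    using assms by (simp add: prob_Zm_gt sum_distrib_left)
  also have "\<dots> \<le> (\<Sum>k\<in>{1..n}. prob {\<omega>\<in>space M. stopP (a+b) k \<omega> \<and> norm (partial_sum Xs n \<omega> - partial_sum Xs k \<omega>) \<le> b})"
    by (intro sum_mono step)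
  also have "\<dots> = prob (\<Union>k\<in>{1..n}. {\<omega>\<in>space M. stopP (a+b) k \<omega> \<and> norm (partial_sum Xs n \<omega> - partial_sum Xs k \<omega>) \<le> b})"
    by (rule finite_measure_finite_Union[symmetric]) (auto simp: disjoint_family_on_def dest: stopP_disj)
  also have "\<dots> \<le> prob {\<omega>\<in>space M. a < norm (partial_sum Xs n \<omega>)}"
  proof (rule finite_measure_mono)
    show "(\<Union>k\<in>{1..n}. {\<omega>\<in>space M. stopP (a+b) k \<omega> \<and> norm (partial_sum Xs n \<omega> - partial_sum Xs k \<omega>) \<le> b})
        \<subseteq> {\<omega>\<in>space M. a < norm (partial_sum Xs n \<omega>)}"
    proof safe
      fix \<omega> k assume "\<omega> \<in> space M" "k \<in> {1..n}" "stopP (a+b) k \<omega>"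
        "norm (partial_sum Xs n \<omega> - partial_sum Xs k \<omega>) \<le> b"
      moreover have "norm (partial_sum Xs k \<omega>) \<le> norm (partial_sum Xs n \<omega>) + norm (partial_sum Xs n \<omega> - partial_sum Xs k \<omega>)"
        using norm_triangle_ineq4[of "partial_sum Xs n \<omega>" "partial_sum Xs n \<omega> - partial_sum Xs k \<omega>"] by simp
      ultimately show "a < norm (partial_sum Xs n \<omega>)" by (auto simp: stopP_def)
    qed
  qed measurable
  finally show ?thesis .
qed

lemma hj:
  assumes t: "0 \<le> t" and s: "0 \<le> s"
  shows "prob {\<omega>\<in>space M. 3*t + s < Zm n \<omega>} \<le> (prob {\<omega>\<in>space M. t < Zm n \<omega>})^2 + prob {\<omega>\<in>space M. s < Wm n \<omega>}"
proof -
  define B where "B k \<omega> = (\<exists>j\<in>{k..n}. 2*t < norm (partial_sum Xs j \<omega> - partial_sum Xs k \<omega>))" for k \<omega>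
  define Q where "Q k y = (\<exists>j\<in>{k..n}. 2*t < norm (\<Sum>i\<in>{Suc k..j}. y i))" for k and y :: "nat \<Rightarrow> 'b"
  have Qm: "Q k \<in> measurable (PiM {Suc k..n} (\<lambda>_. borel)) (count_space UNIV)" for k
  proof -
    have "Measurable.pred (PiM {Suc k..n} (\<lambda>_. borel)) (\<lambda>y::nat\<Rightarrow>'b. 2*t < norm (\<Sum>i\<in>{Suc k..j}. y i))"
      if "j \<in> {k..n}" for j
    proof -
      note mj = measurable_compose[OF sum_comp_meas[of "{Suc k..j}" "{Suc k..n}"] borel_measurable_norm]
      show ?thesis
        by (rule pred_const_less[OF mj]) (use that in auto)
    qed
    then show ?thesis unfolding Q_def
      by (intro pred_intros_finite(4)) auto
  qed
  have Qeq: "Q k (restrict (\<lambda>i. Xs i \<omega>) {Suc k..n}) \<longleftrightarrow> B k \<omega>" for k \<omega>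
  proof -
    have "\<And>j. j \<in> {k..n} \<Longrightarrow> (\<Sum>i\<in>{Suc k..j}. restrict (\<lambda>i. Xs i \<omega>) {Suc k..n} i) = partial_sum Xs j \<omega> - partial_sum Xs k \<omega>"
      by (simp add: S_diff)
    then show ?thesis unfolding Q_def B_def by auto
  qed
  have Bm[measurable]: "Measurable.pred M (B k)" for k
    unfolding B_def by measurable
  have incl: "{\<omega>\<in>space M. 3*t + s < Zm n \<omega>} \<subseteq>
      {\<omega>\<in>space M. s < Wm n \<omega>} \<union> (\<Union>k\<in>{1..n}. {\<omega>\<in>space M. stopP t k \<omega> \<and> B k \<omega>})"
  proof
    fix \<omega> assume "\<omega> \<in> {\<omega>\<in>space M. 3*t + s < Zm n \<omega>}"
    then have \<omega>: "\<omega> \<in> space M" "3*t + s < Zm n \<omega>" by auto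
    show "\<omega> \<in> {\<omega>\<in>space M. s < Wm n \<omega>} \<union> (\<Union>k\<in>{1..n}. {\<omega>\<in>space M. stopP t k \<omega> \<and> B k \<omega>})"
    proof (cases "s < Wm n \<omega>")
      case True then show ?thesis using \<omega> by auto
    next
      case W: False
    have "t < Zm n \<omega>" using \<omega> t s by linarith
    then obtain k where k: "k \<in> {1..n}" "stopP t k \<omega>" using Zm_gt_iff[OF t] by auto
    obtain j where j: "j \<le> n" "3*t + s < norm (partial_sum Xs j \<omega>)"
      using \<omega>(2) unfolding Zm_def by (subst (asm) Max_gr_iff) auto
    have "k \<le> j"
    proof (rule ccontr)
      assume "\<not> k \<le> j"
      then have "norm (partial_sum Xs j \<omega>) \<le> t" using k(2) by (auto simp: stopP_def)
      then show False using j t s by linarith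
    qed
    obtain k' where k': "k = Suc k'" using k by (cases k) auto
    have n1: "norm (partial_sum Xs k' \<omega>) \<le> t" using k(2) k' by (auto simp: stopP_def)
    have n2: "norm (Xs k \<omega>) \<le> s" using norm_X_le_Wm[of k n \<omega>] k W by auto
    define d where "d = partial_sum Xs j \<omega> - partial_sum Xs k \<omega>"
    have eq: "partial_sum Xs j \<omega> = (partial_sum Xs k' \<omega> + Xs k \<omega>) + d"
      using k' by (simp add: S_Suc d_def)
    have "norm (partial_sum Xs j \<omega>) \<le> norm (partial_sum Xs k' \<omega> + Xs k \<omega>) + norm d"
      unfolding eq by (rule norm_triangle_ineq)
    moreover have "norm (partial_sum Xs k' \<omega> + Xs k \<omega>) \<le> norm (partial_sum Xs k' \<omega>) + norm (Xs k \<omega>)"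
      by (rule norm_triangle_ineq)
    ultimately have "norm (partial_sum Xs j \<omega>) \<le> norm (partial_sum Xs k' \<omega>) + norm (Xs k \<omega>) + norm (partial_sum Xs j \<omega> - partial_sum Xs k \<omega>)"
      unfolding d_def by linarith
    then have "2*t < norm (partial_sum Xs j \<omega> - partial_sum Xs k \<omega>)" using n1 n2 j by linarith
    then have "B k \<omega>" unfolding B_def using \<open>k \<le> j\<close> j by auto
    then show ?thesis using k \<omega> by auto
    qed
  qed
  have Bsub: "prob {\<omega>\<in>space M. B k \<omega>} \<le> prob {\<omega>\<in>space M. t < Zm n \<omega>}" for k
  proof (rule finite_measure_mono)
    show "{\<omega>\<in>space M. B k \<omega>} \<subseteq> {\<omega>\<in>space M. t < Zm n \<omega>}"
    proof safe
      fix \<omega> assume "\<omega> \<in> space M" "B k \<omega>"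
      then obtain j where j: "j \<in> {k..n}" "2*t < norm (partial_sum Xs j \<omega> - partial_sum Xs k \<omega>)"
        unfolding B_def by auto
      have "norm (partial_sum Xs j \<omega> - partial_sum Xs k \<omega>) \<le> norm (partial_sum Xs j \<omega>) + norm (partial_sum Xs k \<omega>)"
        by (rule norm_triangle_ineq4)
      moreover have "norm (partial_sum Xs j \<omega>) \<le> Zm n \<omega>" "norm (partial_sum Xs k \<omega>) \<le> Zm n \<omega>"
        using j by (auto intro: norm_S_le_Zm)
      ultimately show "t < Zm n \<omega>" using j by linarith
    qed
  qed measurable
  have "prob {\<omega>\<in>space M. 3*t + s < Zm n \<omega>} \<le>
      prob ({\<omega>\<in>space M. s < Wm n \<omega>} \<union> (\<Union>k\<in>{1..n}. {\<omega>\<in>space M. stopP t k \<omega> \<and> B k \<omega>}))"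
    by (rule finite_measure_mono[OF incl]) (use Bm in measurable)
  also have "\<dots> \<le> prob {\<omega>\<in>space M. s < Wm n \<omega>} + prob (\<Union>k\<in>{1..n}. {\<omega>\<in>space M. stopP t k \<omega> \<and> B k \<omega>})"
  proof (rule measure_subadditive)
    show "{\<omega>\<in>space M. s < Wm n \<omega>} \<in> events" by measurable
    show "(\<Union>k\<in>{1..n}. {\<omega>\<in>space M. stopP t k \<omega> \<and> B k \<omega>}) \<in> events" by measurable
  qed auto
  also have "prob (\<Union>k\<in>{1..n}. {\<omega>\<in>space M. stopP t k \<omega> \<and> B k \<omega>}) \<le> (\<Sum>k\<in>{1..n}. prob {\<omega>\<in>space M. stopP t k \<omega> \<and> B k \<omega>})"
    by (rule finite_measure_subadditive_finite) (use Bm in auto)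
  also have "\<dots> = (\<Sum>k\<in>{1..n}. prob {\<omega>\<in>space M. stopP t k \<omega>} * prob {\<omega>\<in>space M. B k \<omega>})"
  proof (rule sum.cong[OF refl])
    fix k
    have "prob {\<omega>\<in>space M. stopP t k \<omega> \<and> B k \<omega>} = prob {\<omega>\<in>space M. stopP t k \<omega> \<and> Q k (restrict (\<lambda>i. Xs i \<omega>) {Suc k..n})}"
      by (simp add: Qeq)
    also have "\<dots> = prob {\<omega>\<in>space M. stopP t k \<omega>} * prob {\<omega>\<in>space M. Q k (restrict (\<lambda>i. Xs i \<omega>) {Suc k..n})}"
      by (rule indep_stop[OF Qm])
    finally show "prob {\<omega>\<in>space M. stopP t k \<omega> \<and> B k \<omega>} = prob {\<omega>\<in>space M. stopP t k \<omega>} * prob {\<omega>\<in>space M. B k \<omega>}"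
      by (simp add: Qeq)
  qed
  also have "\<dots> \<le> (\<Sum>k\<in>{1..n}. prob {\<omega>\<in>space M. stopP t k \<omega>} * prob {\<omega>\<in>space M. t < Zm n \<omega>})"
    by (intro sum_mono mult_left_mono Bsub) auto
  also have "\<dots> = (prob {\<omega>\<in>space M. t < Zm n \<omega>})^2"
    using t by (simp add: prob_Zm_gt sum_distrib_right power2_eq_square)
  finally show ?thesis by simp
qed

lemma Zm_le_sum: "Zm n \<omega> \<le> (\<Sum>k\<in>{..n}. norm (partial_sum Xs k \<omega>))"
  unfolding Zm_def by (rule Max.boundedI) (auto intro: member_le_sum)

lemma Wm_le_sum: "Wm n \<omega> \<le> (\<Sum>i\<in>{..n}. norm (Xs i \<omega>))"
  unfolding Wm_def by (rule Max.boundedI) (auto intro: member_le_sum)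

lemma Wm_nonneg: "0 \<le> Wm n \<omega>"
  by (rule order_trans[OF norm_ge_zero norm_X_le_Wm[of 0]]) simp

lemma Zm_int: "integrable M (Zm n)"
  by (rule Bochner_Integration.integrable_bound[where f="\<lambda>\<omega>. \<Sum>k\<in>{..n}. norm (partial_sum Xs k \<omega>)"])
     (auto intro!: Bochner_Integration.integrable_sum integrable_norm S_int AE_I2 order_trans[OF Zm_le_sum abs_ge_self] simp: Zm_nonneg)

lemma Wm_int: "integrable M (Wm n)"
  by (rule Bochner_Integration.integrable_bound[where f="\<lambda>\<omega>. \<Sum>i\<in>{..n}. norm (Xs i \<omega>)"])
     (auto intro!: Bochner_Integration.integrable_sum integrable_norm Xs_int AE_I2 order_trans[OF Wm_le_sum abs_ge_self] simp: Wm_nonneg)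

lemma E_Zm_bound:
  assumes t: "0 \<le> t" and small: "prob {\<omega>\<in>space M. t < Zm n \<omega>} \<le> 1/8"
  shows "expectation (Zm n) \<le> 8*t + 8 * expectation (Wm n)"
proof -
  define pZ where "pZ u = prob {\<omega>\<in>space M. u < Zm n \<omega>}" for u
  define pW where "pW u = prob {\<omega>\<in>space M. u < Wm n \<omega>}" for u
  define I where "I u = (indicator {0..} u :: real)" for u :: real
  have [measurable]: "pZ \<in> borel_measurable borel" "pW \<in> borel_measurable borel"
    unfolding pZ_def pW_def by measurable
  have EZ: "(\<integral>\<^sup>+\<omega>. ennreal (Zm n \<omega>) \<partial>M) = ennreal (expectation (Zm n))"
    by (rule nn_integral_eq_integral[OF Zm_int]) (simp add: Zm_nonneg)
  have EW: "(\<integral>\<^sup>+\<omega>. ennreal (Wm n \<omega>) \<partial>M) = ennreal (expectation (Wm n))"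
    by (rule nn_integral_eq_integral[OF Wm_int]) (simp add: Wm_nonneg)
  have EZ4: "(\<integral>\<^sup>+\<omega>. ennreal (Zm n \<omega> / 4) \<partial>M) = ennreal (expectation (Zm n) / 4)"
    using nn_integral_eq_integral[of M "\<lambda>\<omega>. Zm n \<omega> / 4"] Zm_int by (simp add: Zm_nonneg)
  have pt: "prob {\<omega>\<in>space M. u < Zm n \<omega> / 4} * I u \<le> indicator {..<t} u * I u + pZ u * I u / 8 + pW u * I u" for u
  proof (cases "0 \<le> u")
    case False then show ?thesis by (simp add: I_def)
  next
    case u: True
    have "prob {\<omega>\<in>space M. u < Zm n \<omega> / 4} = prob {\<omega>\<in>space M. 3*u + u < Zm n \<omega>}"
      by (intro arg_cong[where f=prob]) auto
    also have "\<dots> \<le> (pZ u)^2 + pW u" unfolding pZ_def pW_def by (rule hj[OF u u])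
    finally have h: "prob {\<omega>\<in>space M. u < Zm n \<omega> / 4} \<le> (pZ u)^2 + pW u" .
    have pos: "0 \<le> pZ u" "0 \<le> pW u" unfolding pZ_def pW_def by auto
    show ?thesis
    proof (cases "u < t")
      case True
      have "prob {\<omega>\<in>space M. u < Zm n \<omega> / 4} \<le> 1" by simp
      then have "prob {\<omega>\<in>space M. u < Zm n \<omega> / 4} \<le> 1 + pZ u / 8 + pW u" using pos by linarith
      then show ?thesis using True u by (simp add: I_def)
    next
      case False
      have "pZ u \<le> pZ t" unfolding pZ_def using False by (intro finite_measure_mono) auto
      then have "pZ u \<le> 1/8" using small unfolding pZ_def by simp
      then have "(pZ u)^2 \<le> pZ u / 8" using pos by (simp add: power2_eq_square mult_left_mono[of _ "1/8" "pZ u", simplified])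
      then show ?thesis using h False u pos by (simp add: I_def)
    qed
  qed
  have "ennreal (expectation (Zm n) / 4) = (\<integral>\<^sup>+u. ennreal (prob {\<omega>\<in>space M. u < Zm n \<omega> / 4} * I u) \<partial>lborel)"
    unfolding EZ4[symmetric] I_def by (rule layer_cake_prob) measurable
  also have "\<dots> \<le> (\<integral>\<^sup>+u. ennreal (indicator {..<t} u * I u) + ennreal (pZ u * I u) * ennreal (1/8) + ennreal (pW u * I u) \<partial>lborel)"
  proof (rule nn_integral_mono)
    fix u
    have "0 \<le> pZ u" "0 \<le> pW u" "0 \<le> I u" unfolding pZ_def pW_def I_def by auto
    then have "ennreal (indicator {..<t} u * I u) + ennreal (pZ u * I u) * ennreal (1/8) + ennreal (pW u * I u)
        = ennreal (indicator {..<t} u * I u + pZ u * I u / 8 + pW u * I u)"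
      by (simp add: ennreal_plus[symmetric] ennreal_mult[symmetric] add_nonneg_nonneg del: ennreal_plus)
    then show "ennreal (prob {\<omega>\<in>space M. u < Zm n \<omega> / 4} * I u) \<le> ennreal (indicator {..<t} u * I u) + ennreal (pZ u * I u) * ennreal (1/8) + ennreal (pW u * I u)"
      using pt[of u] by (simp add: ennreal_leI)
  qed
  also have "\<dots> = (\<integral>\<^sup>+u. ennreal (indicator {..<t} u * I u) \<partial>lborel) + (\<integral>\<^sup>+u. ennreal (pZ u * I u) \<partial>lborel) * ennreal (1/8)
      + (\<integral>\<^sup>+u. ennreal (pW u * I u) \<partial>lborel)"
    by (simp add: nn_integral_add nn_integral_multc I_def)
  also have "(\<integral>\<^sup>+u. ennreal (indicator {..<t} u * I u) \<partial>lborel) = ennreal t"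
  proof -
    have "(\<lambda>u. ennreal (indicator {..<t} u * I u)) = indicator {0..<t}"
      by (auto simp: I_def indicator_def fun_eq_iff)
    then show ?thesis using t by simp
  qed
  also have "(\<integral>\<^sup>+u. ennreal (pZ u * I u) \<partial>lborel) = ennreal (expectation (Zm n))"
    unfolding EZ[symmetric] pZ_def I_def by (rule layer_cake_prob[symmetric]) measurable
  also have "(\<integral>\<^sup>+u. ennreal (pW u * I u) \<partial>lborel) = ennreal (expectation (Wm n))"
    unfolding EW[symmetric] pW_def I_def by (rule layer_cake_prob[symmetric]) measurable
  finally have "ennreal (expectation (Zm n) / 4) \<le> ennreal (t + expectation (Zm n) / 8 + expectation (Wm n))"
    using t Bochner_Integration.integral_nonneg[of M "Zm n"] Bochner_Integration.integral_nonneg[of M "Wm n"]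
    by (simp add: Zm_nonneg Wm_nonneg ennreal_plus[symmetric] ennreal_mult[symmetric] del: ennreal_plus)
  then have "expectation (Zm n) / 4 \<le> t + expectation (Zm n) / 8 + expectation (Wm n)"
    using t Bochner_Integration.integral_nonneg[of M "Zm n"] Bochner_Integration.integral_nonneg[of M "Wm n"]
    by (subst (asm) ennreal_le_iff) (auto simp: Zm_nonneg Wm_nonneg)
  then show ?thesis by linarith
qed

lemma key:
  assumes K: "0 \<le> K"
    and small: "\<And>k. k \<in> {1..n} \<Longrightarrow> prob {\<omega>\<in>space M. K < norm (partial_sum Xs k \<omega>)} \<le> 1/32"
  shows "(\<integral>\<omega>. norm (partial_sum Xs n \<omega>) \<partial>M) \<le> 32*K + 8 * expectation (Wm n)"
proof (cases "n = 0")
  case True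
  then show ?thesis using K Bochner_Integration.integral_nonneg[of M "Wm n"] by (simp add: Wm_nonneg)
next
  case False
  then have n: "n \<in> {1..n}" by simp
  have beta: "prob {\<omega>\<in>space M. 2*K < norm (partial_sum Xs n \<omega> - partial_sum Xs k \<omega>)} \<le> 1/16"
    if k: "k \<in> {1..n}" for k
  proof -
    have "prob {\<omega>\<in>space M. 2*K < norm (partial_sum Xs n \<omega> - partial_sum Xs k \<omega>)}
        \<le> prob ({\<omega>\<in>space M. K < norm (partial_sum Xs n \<omega>)} \<union> {\<omega>\<in>space M. K < norm (partial_sum Xs k \<omega>)})"
    proof (rule finite_measure_mono)
      show "{\<omega>\<in>space M. 2*K < norm (partial_sum Xs n \<omega> - partial_sum Xs k \<omega>)}
        \<subseteq> {\<omega>\<in>space M. K < norm (partial_sum Xs n \<omega>)} \<union> {\<omega>\<in>space M. K < norm (partial_sum Xs k \<omega>)}"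
      proof
        fix \<omega> assume "\<omega> \<in> {\<omega>\<in>space M. 2*K < norm (partial_sum Xs n \<omega> - partial_sum Xs k \<omega>)}"
        then have "\<omega> \<in> space M" "2*K < norm (partial_sum Xs n \<omega> - partial_sum Xs k \<omega>)" by auto
        moreover have "norm (partial_sum Xs n \<omega> - partial_sum Xs k \<omega>) \<le> norm (partial_sum Xs n \<omega>) + norm (partial_sum Xs k \<omega>)"
          by (rule norm_triangle_ineq4)
        ultimately show "\<omega> \<in> {\<omega>\<in>space M. K < norm (partial_sum Xs n \<omega>)} \<union> {\<omega>\<in>space M. K < norm (partial_sum Xs k \<omega>)}"
          by auto
      qed
    qed measurable
    also have "\<dots> \<le> prob {\<omega>\<in>space M. K < norm (partial_sum Xs n \<omega>)} + prob {\<omega>\<in>space M. K < norm (partial_sum Xs k \<omega>)}"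
    proof (rule measure_subadditive)
      show "{\<omega>\<in>space M. K < norm (partial_sum Xs n \<omega>)} \<in> events" by measurable
      show "{\<omega>\<in>space M. K < norm (partial_sum Xs k \<omega>)} \<in> events" by measurable
    qed auto
    also have "\<dots> \<le> 1/16" using small[OF n] small[OF k] by simp
    finally show ?thesis .
  qed
  have "(1 - 1/16) * prob {\<omega>\<in>space M. 2*K + 2*K < Zm n \<omega>} \<le> prob {\<omega>\<in>space M. 2*K < norm (partial_sum Xs n \<omega>)}"
    by (rule ottaviani) (use K beta in auto)
  also have "\<dots> \<le> prob {\<omega>\<in>space M. K < norm (partial_sum Xs n \<omega>)}"
    using K by (intro finite_measure_mono) auto
  also have "\<dots> \<le> 1/32" by (rule small[OF n])
  finally have "prob {\<omega>\<in>space M. 4*K < Zm n \<omega>} \<le> 1/8" by simp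
  then have EZ: "expectation (Zm n) \<le> 8*(4*K) + 8 * expectation (Wm n)"
    by (intro E_Zm_bound) (use K in auto)
  have "(\<integral>\<omega>. norm (partial_sum Xs n \<omega>) \<partial>M) \<le> expectation (Zm n)"
    by (intro integral_mono integrable_norm S_int Zm_int norm_S_le_Zm) auto
  then show ?thesis using EZ by simp
qed

lemma EW_bound:
  assumes Xm[measurable]: "X \<in> borel_measurable M"
    and dist: "\<And>i. i \<ge> 1 \<Longrightarrow> distr M borel (Xs i) = distr M borel X"
    and r: "0 \<le> r"
  shows "expectation (Wm n) \<le> r + real n * (\<integral>\<omega>. (if r < norm (X \<omega>) then norm (X \<omega>) else 0) \<partial>M)"
proof -
  define f where "f y = (if r < norm y then norm y else 0)" for y :: 'b
  have fm[measurable]: "f \<in> borel_measurable borel" unfolding f_def by measurable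
  have f0: "0 \<le> f y" for y unfolding f_def by auto
  have fint: "integrable M (\<lambda>\<omega>. f (Xs i \<omega>))" for i
    by (rule Bochner_Integration.integrable_bound[OF integrable_norm[OF Xs_int[of i]]])
       (auto simp: f_def)
  have pw: "Wm n \<omega> \<le> r + (\<Sum>i\<in>{1..n}. f (Xs i \<omega>))" for \<omega>
    unfolding Wm_def
  proof (rule Max.boundedI)
    fix x assume "x \<in> (\<lambda>i. norm (Xs i \<omega>)) ` {..n}"
    then obtain i where i: "i \<le> n" "x = norm (Xs i \<omega>)" by auto
    have s0: "0 \<le> (\<Sum>i\<in>{1..n}. f (Xs i \<omega>))" by (intro sum_nonneg f0)
    show "x \<le> r + (\<Sum>i\<in>{1..n}. f (Xs i \<omega>))"
    proof (cases "i = 0")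
      case True then show ?thesis using i s0 r by (simp add: Xs0)
    next
      case False
      show ?thesis
      proof (cases "r < norm (Xs i \<omega>)")
        case True
        have "f (Xs i \<omega>) \<le> (\<Sum>i\<in>{1..n}. f (Xs i \<omega>))"
          using False i by (intro member_le_sum f0) auto
        then show ?thesis using True i r by (simp add: f_def)
      next
        case False then show ?thesis using i s0 by simp
      qed
    qed
  qed auto
  have "expectation (Wm n) \<le> (\<integral>\<omega>. r + (\<Sum>i\<in>{1..n}. f (Xs i \<omega>)) \<partial>M)"
    by (intro integral_mono Wm_int pw Bochner_Integration.integrable_add Bochner_Integration.integrable_sum fint) auto
  also have "\<dots> = r + (\<Sum>i\<in>{1..n}. (\<integral>\<omega>. f (Xs i \<omega>) \<partial>M))"
    by (subst Bochner_Integration.integral_add) (auto intro!: Bochner_Integration.integrable_sum fint simp: Bochner_Integration.integral_sum[OF fint] prob_space)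
  also have "(\<Sum>i\<in>{1..n}. (\<integral>\<omega>. f (Xs i \<omega>) \<partial>M)) = (\<Sum>i\<in>{1..n}. (\<integral>\<omega>. f (X \<omega>) \<partial>M))"
  proof (rule sum.cong[OF refl])
    fix i assume "i \<in> {1..n}"
    then have "distr M borel (Xs i) = distr M borel X" by (intro dist) auto
    then have "integral\<^sup>L (distr M borel (Xs i)) f = integral\<^sup>L (distr M borel X) f" by simp
    then show "(\<integral>\<omega>. f (Xs i \<omega>) \<partial>M) = (\<integral>\<omega>. f (X \<omega>) \<partial>M)"
      by (simp add: integral_distr)
  qed
  also have "\<dots> = real n * (\<integral>\<omega>. (if r < norm (X \<omega>) then norm (X \<omega>) else 0) \<partial>M)"
    by (simp add: f_def)
  finally show ?thesis by simp
qed

end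


locale cseq =
  fixes c :: "nat \<Rightarrow> real" and m1 :: nat
  assumes cpos: "\<And>n. n \<ge> 1 \<Longrightarrow> c n > 0"
    and cmono: "\<And>m n. 1 \<le> m \<Longrightarrow> m \<le> n \<Longrightarrow> c m / sqrt m \<le> c n / sqrt n"
    and ctop: "filterlim c at_top sequentially"
    and m1: "m1 \<ge> 1"
    and reg: "\<And>m n. m1 \<le> m \<Longrightarrow> m < n \<Longrightarrow> c n / c m \<le> 2 * (real n / real m)"
begin

lemma c_mono: assumes "1 \<le> m" "m \<le> n" shows "c m \<le> c n"
proof -
  have n: "1 \<le> n" using assms by simp
  have "c m = (c m / sqrt m) * sqrt m" using assms by simp
  also have "\<dots> \<le> (c n / sqrt n) * sqrt m"
    by (intro mult_right_mono cmono assms) auto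
  also have "\<dots> \<le> (c n / sqrt n) * sqrt n"
    using assms cpos[OF n] by (intro mult_left_mono) auto
  also have "\<dots> = c n" using n by simp
  finally show ?thesis .
qed

lemma pw_bound:
  assumes d: "0 < \<delta>" and n: "m1 \<le> n" and dn: "2 \<le> \<delta>^2 * n" and y: "\<delta> * c n < y"
  shows "\<exists>p\<ge>1. c p \<le> y \<and> real n * y / c n \<le> (4 + 2/\<delta>^2) * real p"
proof -
  have n1: "1 \<le> n" using n m1 by simp
  have cn: "0 < c n" using cpos[OF n1] .
  show ?thesis
  proof (cases "y \<le> c n")
    case True
    have "\<delta> * c n < 1 * c n" using y True by linarith
    then have d1: "\<delta> < 1" using cn mult_less_cancel_right[of \<delta> "c n" 1] by linarith
    define m where "m = nat \<lfloor>\<delta>^2 * n\<rfloor>"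
    have m_le: "real m \<le> \<delta>^2 * n" unfolding m_def using dn by (simp add: of_nat_nat)
    have m_gt: "\<delta>^2 * n - 1 < real m" unfolding m_def using dn by (simp add: of_nat_nat)
    have m1': "1 \<le> m" using m_gt dn by linarith
    have "\<delta>^2 < 1" using d d1 by (simp add: power_less_one_iff)
    then have "\<delta>^2 * n \<le> n" using n1 by (simp add: mult_le_cancel_right1)
    then have mn: "m \<le> n" using m_le by linarith
    have "c m \<le> \<delta> * c n"
    proof -
      have "c m = (c m / sqrt m) * sqrt m" using m1' by simp
      also have "\<dots> \<le> (c n / sqrt n) * sqrt m"
        using m1' mn by (intro mult_right_mono cmono) auto
      also have "sqrt m \<le> \<delta> * sqrt n"
      proof -
        have "sqrt m \<le> sqrt (\<delta>^2 * n)" using m_le by simp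
        also have "\<dots> = \<delta> * sqrt n" using d by (simp add: real_sqrt_mult)
        finally show ?thesis .
      qed
      then have "(c n / sqrt n) * sqrt m \<le> (c n / sqrt n) * (\<delta> * sqrt n)"
        using cn by (intro mult_left_mono) auto
      also have "\<dots> = \<delta> * c n" using n1 by simp
      finally show ?thesis .
    qed
    then have cm: "c m \<le> y" using y by simp
    have "real n * y / c n \<le> real n" using True cn
      by (simp add: divide_le_eq mult_left_mono)
    also have "real n \<le> (2/\<delta>^2) * real m"
    proof -
      have "\<delta>^2 * n \<le> 2 * real m" using m_gt dn by linarith
      then show ?thesis using d by (simp add: field_simps)
    qed
    also have "\<dots> \<le> (4 + 2/\<delta>^2) * real m" by (intro mult_right_mono) auto
    finally show ?thesis using m1' cm by blast
  next
    case False
    define S where "S = {k. 1 \<le> k \<and> c k \<le> y}"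
    obtain K where K: "\<And>k. k \<ge> K \<Longrightarrow> y < c k"
      using ctop unfolding filterlim_at_top_dense eventually_sequentially by blast
    have "S \<subseteq> {..<K}" unfolding S_def using K by (auto simp: not_less[symmetric])
    then have finS: "finite S" by (rule finite_subset) simp
    have nS: "n \<in> S" unfolding S_def using n1 False by simp
    define p where "p = Max S"
    have pS: "p \<in> S" unfolding p_def using finS nS by (intro Max_in) auto
    have np: "n \<le> p" unfolding p_def using finS nS by simp
    have "Suc p \<notin> S" unfolding p_def using finS
      by (metis Max_ge Suc_n_not_le_n)
    then have cp1: "y < c (Suc p)" unfolding S_def by auto
    have "c (Suc p) / c n \<le> 2 * (real (Suc p) / real n)"
      using reg[OF n, of "Suc p"] np by linarith
    then have "c (Suc p) \<le> 2 * (real (Suc p) / real n) * c n"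
      using cn by (simp add: divide_le_eq)
    then have "real n * y / c n \<le> real n * (2 * (real (Suc p) / real n) * c n) / c n"
      using cp1 cn n1 by (intro divide_right_mono mult_left_mono) auto
    also have "\<dots> = 2 * real (Suc p)" using cn n1 by simp
    also have "\<dots> \<le> 4 * real p" using pS unfolding S_def by simp
    also have "\<dots> \<le> (4 + 2/\<delta>^2) * real p" by (intro mult_right_mono) auto
    finally show ?thesis using pS unfolding S_def by blast
  qed
qed

lemma tail_conv:
  assumes P: "prob_space M" and Ym[measurable]: "Y \<in> borel_measurable M" and Y0: "\<And>\<omega>. 0 \<le> Y \<omega>"
    and Yint: "integrable M Y"
    and summ: "summable (\<lambda>k. measure M {\<omega>\<in>space M. c (Suc k) \<le> Y \<omega>})" and d: "0 < \<delta>"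
  shows "(\<lambda>n. real n * (\<integral>\<omega>. (if \<delta> * c n < Y \<omega> then Y \<omega> else 0) \<partial>M) / c n) \<longlonglongrightarrow> 0"
proof -
  interpret prob_space M by (rule P)
  define Nf where "Nf y = (\<Sum>k. (indicator {c (Suc k)..} y :: ennreal))" for y
  have Nfm[measurable]: "(\<lambda>\<omega>. Nf (Y \<omega>)) \<in> borel_measurable M"
    unfolding Nf_def by measurable
  have "(\<integral>\<^sup>+\<omega>. Nf (Y \<omega>) \<partial>M) = (\<Sum>k. \<integral>\<^sup>+\<omega>. indicator {c (Suc k)..} (Y \<omega>) \<partial>M)"
    unfolding Nf_def by (rule nn_integral_suminf) measurable
  also have "\<dots> = (\<Sum>k. ennreal (measure M {\<omega>\<in>space M. c (Suc k) \<le> Y \<omega>}))"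
  proof (rule suminf_cong)
    fix k
    have "(\<integral>\<^sup>+\<omega>. indicator {c (Suc k)..} (Y \<omega>) \<partial>M) = (\<integral>\<^sup>+\<omega>. indicator {\<omega>\<in>space M. c (Suc k) \<le> Y \<omega>} \<omega> \<partial>M)"
      by (intro nn_integral_cong) (auto simp: indicator_def)
    also have "\<dots> = emeasure M {\<omega>\<in>space M. c (Suc k) \<le> Y \<omega>}"
      by (rule nn_integral_indicator) measurable
    finally show "(\<integral>\<^sup>+\<omega>. indicator {c (Suc k)..} (Y \<omega>) \<partial>M) = ennreal (measure M {\<omega>\<in>space M. c (Suc k) \<le> Y \<omega>})"
      by (simp add: emeasure_eq_measure)
  qed
  also have "\<dots> = ennreal (\<Sum>k. measure M {\<omega>\<in>space M. c (Suc k) \<le> Y \<omega>})"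
    by (rule suminf_ennreal2) (auto intro: summ)
  finally have Nf_fin: "(\<integral>\<^sup>+\<omega>. Nf (Y \<omega>) \<partial>M) < \<infinity>" by simp
  have Nf_ge: "of_nat p \<le> Nf y" if p: "1 \<le> p" "c p \<le> y" for p y
  proof -
    have "(\<Sum>k<p. (indicator {c (Suc k)..} y :: ennreal)) = (\<Sum>k<p. 1)"
    proof (rule sum.cong[OF refl])
      fix k assume "k \<in> {..<p}"
      then have "c (Suc k) \<le> c p" by (intro c_mono) auto
      then show "(indicator {c (Suc k)..} y :: ennreal) = 1" using p by (simp add: indicator_def)
    qed
    also have "\<dots> = of_nat p" by simp
    finally have "of_nat p = (\<Sum>k<p. (indicator {c (Suc k)..} y :: ennreal))" by simp
    also have "\<dots> \<le> Nf y" unfolding Nf_def by (rule sum_le_suminf) auto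
    finally show ?thesis .
  qed
  define C where "C = 4 + 2/\<delta>^2"
  have C0: "0 \<le> C" unfolding C_def by simp
  obtain n0 where n0: "\<And>n. n \<ge> n0 \<Longrightarrow> m1 \<le> n \<and> 2 \<le> \<delta>^2 * n"
  proof -
    obtain N :: nat where N: "2 / \<delta>^2 < N" using reals_Archimedean2 by blast
    show ?thesis
    proof (rule that[of "max m1 N"])
      fix n assume "max m1 N \<le> n"
      then have "m1 \<le> n" "real N \<le> n" by auto
      then have "2 / \<delta>^2 < n" using N by linarith
      then show "m1 \<le> n \<and> 2 \<le> \<delta>^2 * n" using d \<open>m1 \<le> n\<close> by (simp add: field_simps)
    qed
  qed
  define g where "g n \<omega> = real n * (if \<delta> * c n < Y \<omega> then Y \<omega> else 0) / c n" for n \<omega>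
  define u where "u n \<omega> = ennreal C * (Nf (Y \<omega>) * indicator {\<omega>. \<delta> * c n < Y \<omega>} \<omega>)" for n \<omega>
  have gm[measurable]: "g n \<in> borel_measurable M" for n unfolding g_def by measurable
  have um[measurable]: "u n \<in> borel_measurable M" for n unfolding u_def by measurable
  have g0: "0 \<le> g n \<omega>" if "n \<ge> 1" for n \<omega>
    using cpos[OF that] Y0[of \<omega>] unfolding g_def by auto
  have gint: "integrable M (g n)" for n
  proof -
    have "integrable M (\<lambda>\<omega>. (if \<delta> * c n < Y \<omega> then Y \<omega> else 0))"
      by (rule Bochner_Integration.integrable_bound[OF Yint]) (auto simp: Y0)
    then show ?thesis unfolding g_def
      by (intro integrable_divide integrable_mult_right)
  qed
  have pw: "ennreal (g n \<omega>) \<le> u n \<omega>" if n: "n \<ge> n0" for n \<omega>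
  proof (cases "\<delta> * c n < Y \<omega>")
    case False then show ?thesis by (simp add: g_def)
  next
    case True
    obtain p where p: "1 \<le> p" "c p \<le> Y \<omega>" "real n * Y \<omega> / c n \<le> C * real p"
      using pw_bound[OF d _ _ True] n0[OF n] unfolding C_def by blast
    have "ennreal (g n \<omega>) = ennreal (real n * Y \<omega> / c n)" using True by (simp add: g_def)
    also have "\<dots> \<le> ennreal (C * real p)" using p(3) by (rule ennreal_leI)
    also have "\<dots> = ennreal C * of_nat p" using C0 by (simp add: ennreal_mult ennreal_of_nat_eq_real_of_nat)
    also have "\<dots> \<le> ennreal C * Nf (Y \<omega>)" by (intro mult_left_mono Nf_ge p) auto
    also have "\<dots> = u n \<omega>" using True by (simp add: u_def)
    finally show ?thesis .
  qed
  have ulim: "(\<lambda>n. \<integral>\<^sup>+\<omega>. u n \<omega> \<partial>M) \<longlonglongrightarrow> (\<integral>\<^sup>+\<omega>. 0 \<partial>M)"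
  proof (rule nn_integral_dominated_convergence[where w="\<lambda>\<omega>. ennreal C * Nf (Y \<omega>)"])
    show "AE \<omega> in M. u n \<omega> \<le> ennreal C * Nf (Y \<omega>)" for n
      by (intro AE_I2) (auto simp: u_def indicator_def intro: mult_left_mono)
    show "(\<integral>\<^sup>+\<omega>. ennreal C * Nf (Y \<omega>) \<partial>M) < \<infinity>"
      using Nf_fin by (simp add: nn_integral_cmult ennreal_mult_less_top)
    show "AE \<omega> in M. (\<lambda>n. u n \<omega>) \<longlonglongrightarrow> 0"
    proof (intro AE_I2)
      fix \<omega>
      have "eventually (\<lambda>n. Y \<omega> / \<delta> < c n) sequentially"
        using ctop unfolding filterlim_at_top_dense by blast
      then have "eventually (\<lambda>n. u n \<omega> = 0) sequentially"
        by eventually_elim (use d in \<open>auto simp: u_def indicator_def field_simps\<close>)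
      then show "(\<lambda>n. u n \<omega>) \<longlonglongrightarrow> 0" by (rule tendsto_eventually)
    qed
  qed measurable
  have glim: "(\<lambda>n. \<integral>\<^sup>+\<omega>. ennreal (g n \<omega>) \<partial>M) \<longlonglongrightarrow> 0"
  proof (rule tendsto_sandwich[of "\<lambda>_. 0" _ _ "\<lambda>n. \<integral>\<^sup>+\<omega>. u n \<omega> \<partial>M"])
    show "eventually (\<lambda>n. 0 \<le> (\<integral>\<^sup>+\<omega>. ennreal (g n \<omega>) \<partial>M)) sequentially" by simp
    show "eventually (\<lambda>n. (\<integral>\<^sup>+\<omega>. ennreal (g n \<omega>) \<partial>M) \<le> (\<integral>\<^sup>+\<omega>. u n \<omega> \<partial>M)) sequentially"
      using eventually_ge_at_top[of n0] by eventually_elim (intro nn_integral_mono pw, simp)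
  qed (use ulim in simp_all)
  have eq: "(\<integral>\<^sup>+\<omega>. ennreal (g n \<omega>) \<partial>M) = ennreal (real n * (\<integral>\<omega>. (if \<delta> * c n < Y \<omega> then Y \<omega> else 0) \<partial>M) / c n)"
    if "n \<ge> 1" for n
  proof -
    have "(\<integral>\<^sup>+\<omega>. ennreal (g n \<omega>) \<partial>M) = ennreal (\<integral>\<omega>. g n \<omega> \<partial>M)"
      by (rule nn_integral_eq_integral[OF gint]) (use g0 that in auto)
    also have "(\<integral>\<omega>. g n \<omega> \<partial>M) = real n * (\<integral>\<omega>. (if \<delta> * c n < Y \<omega> then Y \<omega> else 0) \<partial>M) / c n"
      unfolding g_def by simp
    finally show ?thesis .
  qed
  have "(\<lambda>n. ennreal (real n * (\<integral>\<omega>. (if \<delta> * c n < Y \<omega> then Y \<omega> else 0) \<partial>M) / c n)) \<longlonglongrightarrow> ennreal 0"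
  proof -
    have ev: "eventually (\<lambda>n. (\<integral>\<^sup>+\<omega>. ennreal (g n \<omega>) \<partial>M) = ennreal (real n * (\<integral>\<omega>. (if \<delta> * c n < Y \<omega> then Y \<omega> else 0) \<partial>M) / c n)) sequentially"
      using eventually_ge_at_top[of 1] by eventually_elim (rule eq)
    show ?thesis using Lim_transform_eventually[OF glim ev] by simp
  qed
  moreover have "eventually (\<lambda>n. 0 \<le> real n * (\<integral>\<omega>. (if \<delta> * c n < Y \<omega> then Y \<omega> else 0) \<partial>M) / c n) sequentially"
    using eventually_ge_at_top[of 1]
    by eventually_elim (use cpos Y0 in \<open>auto intro!: divide_nonneg_pos mult_nonneg_nonneg Bochner_Integration.integral_nonneg\<close>)
  ultimately show ?thesis by (intro tendsto_ennrealD[where x=0]) auto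
qed

end


theorem lemma1:
  fixes M :: "'a measure"
    and X :: "'a \<Rightarrow> 'b::{banach, second_countable_topology}"
    and Xs :: "nat \<Rightarrow> 'a \<Rightarrow> 'b"
    and c :: "nat \<Rightarrow> real"
  assumes "prob_space M"
    and "X \<in> borel_measurable M"
    and "\<And>i. i \<ge> 1 \<Longrightarrow> Xs i \<in> borel_measurable M"
    and "prob_space.indep_vars M (\<lambda>_. borel) Xs {1..}"
    and "\<And>i. i \<ge> 1 \<Longrightarrow> distr M borel (Xs i) = distr M borel X"
    and "integrable M X" and "integral\<^sup>L M X = 0"
    and "\<And>n. n \<ge> 1 \<Longrightarrow> c n > 0"
    and "\<And>n. n \<ge> 1 \<Longrightarrow> c n / sqrt (real n) \<le> c (Suc n) / sqrt (real (Suc n))"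
    and "filterlim (\<lambda>n. c n / sqrt (real n)) at_top sequentially"
    and "\<forall>\<epsilon>>0. \<exists>m\<^sub>\<epsilon>\<ge>1. \<forall>m n. m\<^sub>\<epsilon> \<le> m \<and> m < n \<longrightarrow>
            c n / c m \<le> (1 + \<epsilon>) * (real n / real m)"
    and "summable (\<lambda>n. measure M {\<omega>\<in>space M. norm (X \<omega>) \<ge> c (Suc n)})"
  shows "(bounded_in_prob M (\<lambda>n \<omega>. scaleR (1 / c n) (partial_sum Xs n \<omega>)) \<longleftrightarrow>
            limsup (\<lambda>n. ereal ((\<integral>\<omega>. norm (partial_sum Xs n \<omega>) \<partial>M) / c n)) < \<infinity>)
       \<and> (tendsto_zero_in_prob M (\<lambda>n \<omega>. scaleR (1 / c n) (partial_sum Xs n \<omega>)) \<longleftrightarrow>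
            (\<lambda>n. (\<integral>\<omega>. norm (partial_sum Xs n \<omega>) \<partial>M) / c n) \<longlonglongrightarrow> 0)"
proof -
  interpret prob_space M by (rule assms(1))
  note Xm[measurable] = assms(2)
  define Ys where "Ys i = (if i = 0 then (\<lambda>_. 0) else Xs i)" for i
  have psum: "partial_sum Ys = partial_sum Xs"
    unfolding partial_sum_def Ys_def by (auto intro!: ext sum.cong)
  have Ys_meas: "Ys i \<in> borel_measurable M" for i
    using assms(3)[of i] by (cases "i = 0") (auto simp: Ys_def)
  have Ys_indep: "indep_vars (\<lambda>_. borel) Ys {1..}"
    using assms(4) indep_vars_cong[of "{1..}" "{1..}" Ys Xs "\<lambda>_. borel" "\<lambda>_. borel"]
    by (auto simp: Ys_def)
  have Ydist: "distr M borel (Ys i) = distr M borel X" if "i \<ge> 1" for i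
    using assms(5)[OF that] that by (simp add: Ys_def)
  have Ys_int: "integrable M (Ys i)" for i
  proof (cases "i = 0")
    case True then show ?thesis by (simp add: Ys_def)
  next
    case False
    then have i: "i \<ge> 1" by simp
    have "integrable (distr M borel (Ys i)) (\<lambda>x. x) \<longleftrightarrow> integrable M (\<lambda>\<omega>. Ys i \<omega>)"
      by (rule integrable_distr_eq) (auto intro: Ys_meas)
    moreover have "integrable (distr M borel X) (\<lambda>x. x) \<longleftrightarrow> integrable M (\<lambda>\<omega>. X \<omega>)"
      by (rule integrable_distr_eq) auto
    ultimately show ?thesis using Ydist[OF i] assms(6) by simp
  qed
  interpret I: iid_setup M Ys
    by (intro iid_setup.intro iid_setup_axioms.intro assms(1) Ys_meas Ys_indep Ys_int) (simp add: Ys_def)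

  have cm: "c m / sqrt m \<le> c n / sqrt n" if "1 \<le> m" "m \<le> n" for m n
    using that(2,1)
  proof (induction n rule: dec_induct)
    case base then show ?case by simp
  next
    case (step n) then show ?case using assms(9)[of n] by simp
  qed
  have ctop: "filterlim c at_top sequentially"
  proof (rule filterlim_at_top_mono[OF assms(10)])
    show "eventually (\<lambda>n. c n / sqrt (real n) \<le> c n) sequentially"
      using eventually_ge_at_top[of 1]
    proof eventually_elim
      case (elim n)
      then have "c n / sqrt (real n) \<le> c n / 1"
        using assms(8)[OF elim] by (intro divide_left_mono) auto
      then show ?case by simp
    qed
  qed
  obtain m1 where m1: "m1 \<ge> 1" "\<And>m n. m1 \<le> m \<Longrightarrow> m < n \<Longrightarrow> c n / c m \<le> 2 * (real n / real m)"
    using assms(11)[rule_format, of 1] by auto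
  interpret C: cseq c m1
    by unfold_locales (use assms(8) cm ctop m1 in auto)

  define tl where "tl r = (\<integral>\<omega>. (if r < norm (X \<omega>) then norm (X \<omega>) else 0) \<partial>M)" for r
  have tailc: "(\<lambda>n. real n * tl (\<delta> * c n) / c n) \<longlonglongrightarrow> 0" if "0 < \<delta>" for \<delta>
    unfolding tl_def
    by (rule C.tail_conv[OF assms(1), of "\<lambda>\<omega>. norm (X \<omega>)"]) (use assms(6,12) that in auto)
  define E where "E n = (\<integral>\<omega>. norm (partial_sum Xs n \<omega>) \<partial>M) / c n" for n
  have keyc: "(\<integral>\<omega>. norm (partial_sum Xs n \<omega>) \<partial>M) \<le> 32*K + 8 * (r + real n * tl r)"
    if "0 \<le> K" "0 \<le> r" "\<And>k. k \<in> {1..n} \<Longrightarrow> prob {\<omega>\<in>space M. K < norm (partial_sum Xs k \<omega>)} \<le> 1/32"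
    for n K r
  proof -
    have "(\<integral>\<omega>. norm (partial_sum Xs n \<omega>) \<partial>M) \<le> 32*K + 8 * expectation (I.Wm n)"
      using I.key[of K n] that unfolding psum by auto
    also have "expectation (I.Wm n) \<le> r + real n * tl r"
      unfolding tl_def by (rule I.EW_bound[OF Xm Ydist that(2)])
    finally show ?thesis by simp
  qed
  have Sint: "integrable M (\<lambda>\<omega>. norm (partial_sum Xs n \<omega>))" for n
    using I.S_int[of n] unfolding psum by (rule integrable_norm)
  have Smeas[measurable]: "partial_sum Xs n \<in> borel_measurable M" for n
    using I.S_meas[of n] unfolding psum .
  have ES0: "0 \<le> (\<integral>\<omega>. norm (partial_sum Xs n \<omega>) \<partial>M)" for n
    by (rule Bochner_Integration.integral_nonneg) simp
  have markov0: "prob {\<omega>\<in>space M. a < norm (partial_sum Xs k \<omega>)} \<le> (\<integral>\<omega>. norm (partial_sum Xs k \<omega>) \<partial>M) / a"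
    if "0 < a" for a k
  proof -
    have "prob {\<omega>\<in>space M. a < norm (partial_sum Xs k \<omega>)} \<le> prob {\<omega>\<in>space M. a \<le> norm (partial_sum Xs k \<omega>)}"
      by (intro finite_measure_mono) auto
    also have "\<dots> \<le> (\<integral>\<omega>. norm (partial_sum Xs k \<omega>) \<partial>M) / a"
      by (rule integral_Markov_inequality_measure[OF Sint _ _ that, of "space M"]) auto
    finally show ?thesis .
  qed
  have scl: "{\<omega>\<in>space M. K < norm (scaleR (1 / c n) (partial_sum Xs n \<omega>))} = {\<omega>\<in>space M. K * c n < norm (partial_sum Xs n \<omega>)}"
    if "n \<ge> 1" for n K
    using assms(8)[OF that] by (auto simp: pos_less_divide_eq)
  have markov: "prob {\<omega>\<in>space M. K < norm (scaleR (1 / c n) (partial_sum Xs n \<omega>))} \<le> E n / K"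
    if "n \<ge> 1" "0 < K" for n K
    unfolding scl[OF that(1)] E_def
    using markov0[of "K * c n" n] assms(8)[OF that(1)] that(2) by (simp add: field_simps)
  have E0: "0 \<le> E n" if "n \<ge> 1" for n
    unfolding E_def using ES0[of n] assms(8)[OF that] by simp

  have a1: "limsup (\<lambda>n. ereal (E n)) < \<infinity>"
    if bip: "bounded_in_prob M (\<lambda>n \<omega>. scaleR (1 / c n) (partial_sum Xs n \<omega>))"
  proof -
    obtain K0 where K0: "\<And>n. n \<ge> 1 \<Longrightarrow> prob {\<omega>\<in>space M. K0 < norm (scaleR (1 / c n) (partial_sum Xs n \<omega>))} \<le> 1/32"
      using bip unfolding bounded_in_prob_def by (metis zero_less_divide_1_iff zero_less_numeral)
    define K where "K = max K0 0"
    have K: "0 \<le> K" "K0 \<le> K" unfolding K_def by auto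
    have bnd: "E n \<le> 32*K + 8 + 8 * (real n * tl (1 * c n) / c n)" if n: "n \<ge> 1" for n
    proof -
      have cn: "0 < c n" using assms(8)[OF n] .
      have small: "prob {\<omega>\<in>space M. K * c n < norm (partial_sum Xs k \<omega>)} \<le> 1/32" if k: "k \<in> {1..n}" for k
      proof -
        have ck: "0 < c k" "c k \<le> c n" using k assms(8)[of k] C.c_mono[of k n] by auto
        have "prob {\<omega>\<in>space M. K * c n < norm (partial_sum Xs k \<omega>)} \<le> prob {\<omega>\<in>space M. K0 < norm (scaleR (1 / c k) (partial_sum Xs k \<omega>))}"
        proof (rule finite_measure_mono)
          show "{\<omega>\<in>space M. K * c n < norm (partial_sum Xs k \<omega>)} \<subseteq> {\<omega>\<in>space M. K0 < norm (scaleR (1 / c k) (partial_sum Xs k \<omega>))}"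
          proof safe
            fix \<omega> assume "K * c n < norm (partial_sum Xs k \<omega>)"
            moreover have "K0 * c k \<le> K * c n"
              using K ck by (intro mult_mono) auto
            ultimately show "K0 < norm (scaleR (1 / c k) (partial_sum Xs k \<omega>))"
              using ck by (simp add: pos_less_divide_eq)
          qed
        qed measurable
        also have "\<dots> \<le> 1/32" using K0[of k] k by auto
        finally show ?thesis .
      qed
      have "(\<integral>\<omega>. norm (partial_sum Xs n \<omega>) \<partial>M) \<le> 32*(K * c n) + 8 * (c n + real n * tl (c n))"
        by (rule keyc) (use K cn small in auto)
      then have "E n \<le> (32*(K * c n) + 8 * (c n + real n * tl (c n))) / c n"
        unfolding E_def using cn by (intro divide_right_mono) auto
      also have "\<dots> = 32*K + 8 + 8 * (real n * tl (1 * c n) / c n)"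
        using cn by (simp add: field_simps)
      finally show ?thesis .
    qed
    have "eventually (\<lambda>n. real n * tl (1 * c n) / c n < 1) sequentially"
      using tailc[of 1] by (simp add: order_tendsto_iff)
    then have "eventually (\<lambda>n. ereal (E n) \<le> ereal (32*K + 16)) sequentially"
      using eventually_ge_at_top[of 1]
    proof eventually_elim
      case (elim n)
      then show ?case using bnd[OF elim(2)] by simp
    qed
    then have "limsup (\<lambda>n. ereal (E n)) \<le> ereal (32*K + 16)"
      by (rule Limsup_bounded)
    then show ?thesis by (rule order.strict_trans1) simp
  qed

  have a2: "bounded_in_prob M (\<lambda>n \<omega>. scaleR (1 / c n) (partial_sum Xs n \<omega>))"
    if ls: "limsup (\<lambda>n. ereal (E n)) < \<infinity>"
  proof -
    obtain B :: nat where B: "limsup (\<lambda>n. ereal (E n)) < ereal (real B)"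
      using ls less_PInf_Ex_of_nat by auto
    have "eventually (\<lambda>n. ereal (E n) < ereal (real B)) sequentially"
      by (rule Limsup_lessD[OF B])
    then obtain N where N: "\<And>n. n \<ge> N \<Longrightarrow> E n < real B"
      unfolding eventually_sequentially by auto
    define Bd where "Bd = real B + (\<Sum>n<N. \<bar>E n\<bar>)"
    have Bd0: "0 \<le> Bd" unfolding Bd_def by (simp add: sum_nonneg)
    have EB: "E n \<le> Bd" for n
    proof (cases "n < N")
      case True
      then have "\<bar>E n\<bar> \<le> (\<Sum>n<N. \<bar>E n\<bar>)" by (intro member_le_sum) auto
      then show ?thesis unfolding Bd_def by linarith
    next
      case False
      then have "E n < real B" using N by simp
      moreover have "0 \<le> (\<Sum>n<N. \<bar>E n\<bar>)" by (rule sum_nonneg) simp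
      ultimately show ?thesis unfolding Bd_def by linarith
    qed
    show ?thesis
      unfolding bounded_in_prob_def
    proof (intro allI impI)
      fix \<epsilon> :: real assume e: "0 < \<epsilon>"
      define K where "K = Bd / \<epsilon> + 1"
      have K0: "0 < K" unfolding K_def using Bd0 e by (simp add: add_nonneg_pos)
      have "Bd / K \<le> \<epsilon>"
        using K0 e unfolding K_def by (simp add: divide_le_eq field_simps)
      show "\<exists>K. \<forall>n\<ge>1. prob {\<omega>\<in>space M. K < norm (scaleR (1 / c n) (partial_sum Xs n \<omega>))} \<le> \<epsilon>"
      proof (intro exI allI impI)
        fix n :: nat assume n: "1 \<le> n"
        have "prob {\<omega>\<in>space M. K < norm (scaleR (1 / c n) (partial_sum Xs n \<omega>))} \<le> E n / K"
          by (rule markov[OF n K0])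
        also have "\<dots> \<le> Bd / K" using EB[of n] K0 by (intro divide_right_mono) auto
        also have "\<dots> \<le> \<epsilon>" by fact
        finally show "prob {\<omega>\<in>space M. K < norm (scaleR (1 / c n) (partial_sum Xs n \<omega>))} \<le> \<epsilon>" .
      qed
    qed
  qed

  have b2: "tendsto_zero_in_prob M (\<lambda>n \<omega>. scaleR (1 / c n) (partial_sum Xs n \<omega>))"
    if lim: "E \<longlonglongrightarrow> 0"
    unfolding tendsto_zero_in_prob_def
  proof (intro allI impI)
    fix \<epsilon> :: real assume e: "0 < \<epsilon>"
    show "(\<lambda>n. prob {\<omega>\<in>space M. \<epsilon> < norm (scaleR (1 / c n) (partial_sum Xs n \<omega>))}) \<longlonglongrightarrow> 0"
    proof (rule tendsto_sandwich[of "\<lambda>_. 0" _ _ "\<lambda>n. E n / \<epsilon>"])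
      show "eventually (\<lambda>n. 0 \<le> prob {\<omega>\<in>space M. \<epsilon> < norm (scaleR (1 / c n) (partial_sum Xs n \<omega>))}) sequentially"
        by simp
      show "eventually (\<lambda>n. prob {\<omega>\<in>space M. \<epsilon> < norm (scaleR (1 / c n) (partial_sum Xs n \<omega>))} \<le> E n / \<epsilon>) sequentially"
        using eventually_ge_at_top[of 1] by eventually_elim (use markov e in auto)
      show "(\<lambda>n. E n / \<epsilon>) \<longlonglongrightarrow> 0"
        using tendsto_divide[OF lim tendsto_const[of \<epsilon>]] e by simp
    qed simp
  qed

  have b1: "E \<longlonglongrightarrow> 0"
    if tzp: "tendsto_zero_in_prob M (\<lambda>n \<omega>. scaleR (1 / c n) (partial_sum Xs n \<omega>))"
  proof (rule LIMSEQ_I)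
    fix r :: real assume r: "0 < r"
    define \<delta> where "\<delta> = r / 80"
    have d: "0 < \<delta>" unfolding \<delta>_def using r by simp
    have "(\<lambda>n. prob {\<omega>\<in>space M. \<delta> < norm (scaleR (1 / c n) (partial_sum Xs n \<omega>))}) \<longlonglongrightarrow> 0"
      using tzp d unfolding tendsto_zero_in_prob_def by auto
    from LIMSEQ_D[OF this, of "1/32"] obtain N1 where
      N1': "\<forall>n\<ge>N1. norm (prob {\<omega>\<in>space M. \<delta> < norm (scaleR (1 / c n) (partial_sum Xs n \<omega>))} - 0) < 1/32"
      by auto
    have N1: "prob {\<omega>\<in>space M. \<delta> < norm (scaleR (1 / c n) (partial_sum Xs n \<omega>))} < 1/32" if "n \<ge> N1" for n
      using N1' that by simp
    define G where "G = (\<Sum>k<N1. (\<integral>\<omega>. norm (partial_sum Xs k \<omega>) \<partial>M))"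
    have G0: "0 \<le> G" unfolding G_def by (intro sum_nonneg ES0)
    have "eventually (\<lambda>n. 32 * G / \<delta> < c n) sequentially"
      using ctop unfolding filterlim_at_top_dense by blast
    then obtain N3 where N3: "\<And>n. n \<ge> N3 \<Longrightarrow> 32 * G / \<delta> < c n"
      unfolding eventually_sequentially by auto
    from LIMSEQ_D[OF tailc[OF d], of "r/16"] r obtain N2 where
      N2': "\<forall>n\<ge>N2. norm (real n * tl (\<delta> * c n) / c n - 0) < r/16" by auto
    have N2: "real n * tl (\<delta> * c n) / c n < r / 16" if "n \<ge> N2" for n
    proof -
      have "norm (real n * tl (\<delta> * c n) / c n - 0) < r/16" using N2' that by blast
      then have "\<bar>real n * tl (\<delta> * c n) / c n\<bar> < r/16" by (simp only: diff_zero real_norm_def)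
      then show ?thesis by (rule le_less_trans[OF abs_ge_self])
    qed
    show "\<exists>no. \<forall>n\<ge>no. norm (E n - 0) < r"
    proof (intro exI allI impI)
      fix n assume "max (max N1 N2) (max N3 1) \<le> n"
      then have n: "N1 \<le> n" "N2 \<le> n" "N3 \<le> n" "1 \<le> n" by auto
      have cn: "0 < c n" using assms(8) n by simp
      have small: "prob {\<omega>\<in>space M. \<delta> * c n < norm (partial_sum Xs k \<omega>)} \<le> 1/32" if k: "k \<in> {1..n}" for k
      proof (cases "N1 \<le> k")
        case True
        have ck: "0 < c k" "c k \<le> c n" using k assms(8)[of k] C.c_mono[of k n] by auto
        have "prob {\<omega>\<in>space M. \<delta> * c n < norm (partial_sum Xs k \<omega>)} \<le> prob {\<omega>\<in>space M. \<delta> < norm (scaleR (1 / c k) (partial_sum Xs k \<omega>))}"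
        proof (rule finite_measure_mono)
          show "{\<omega>\<in>space M. \<delta> * c n < norm (partial_sum Xs k \<omega>)} \<subseteq> {\<omega>\<in>space M. \<delta> < norm (scaleR (1 / c k) (partial_sum Xs k \<omega>))}"
          proof safe
            fix \<omega> assume "\<delta> * c n < norm (partial_sum Xs k \<omega>)"
            moreover have "\<delta> * c k \<le> \<delta> * c n" using d ck by simp
            ultimately show "\<delta> < norm (scaleR (1 / c k) (partial_sum Xs k \<omega>))"
              using ck by (simp add: pos_less_divide_eq)
          qed
        qed measurable
        also have "\<dots> \<le> 1/32" using N1[OF True] by simp
        finally show ?thesis .
      next
        case False
        have "prob {\<omega>\<in>space M. \<delta> * c n < norm (partial_sum Xs k \<omega>)} \<le> (\<integral>\<omega>. norm (partial_sum Xs k \<omega>) \<partial>M) / (\<delta> * c n)"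
          by (rule markov0) (use d cn in simp)
        also have "\<dots> \<le> G / (\<delta> * c n)"
          unfolding G_def using False d cn
          by (intro divide_right_mono member_le_sum ES0) auto
        also have "\<dots> \<le> 1/32"
        proof -
          have "32 * G / \<delta> < c n" using N3 n by simp
          then have "32 * G < \<delta> * c n" using d by (simp add: divide_less_eq mult.commute)
          then show ?thesis using d cn by (simp add: divide_le_eq)
        qed
        finally show ?thesis .
      qed
      have "(\<integral>\<omega>. norm (partial_sum Xs n \<omega>) \<partial>M) \<le> 32*(\<delta> * c n) + 8 * (\<delta> * c n + real n * tl (\<delta> * c n))"
        by (rule keyc) (use d cn small in auto)
      then have "E n \<le> (32*(\<delta> * c n) + 8 * (\<delta> * c n + real n * tl (\<delta> * c n))) / c n"
        unfolding E_def using cn by (intro divide_right_mono) auto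
      also have "\<dots> = 40 * \<delta> + 8 * (real n * tl (\<delta> * c n) / c n)"
        using cn by (simp add: field_simps)
      also have "\<dots> < r"
      proof -
        have "8 * (real n * tl (\<delta> * c n) / c n) < 8 * (r / 16)" using N2[OF n(2)] by (intro mult_strict_left_mono) auto
        moreover have "40 * \<delta> = r / 2" unfolding \<delta>_def by simp
        ultimately show ?thesis by linarith
      qed
      finally show "norm (E n - 0) < r" using E0[OF n(4)] by simp
    qed
  qed

  show ?thesis
    using a1 a2 b1 b2 unfolding E_def by blast
qed


end
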